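(* Let $k,n\ge 1$ and $q\ge 2$ be integers and let $\varepsilon>0$. Let $H$ be a $qk$-uniform hypergraph on $qn$ vertices, and let $\mathcal{Q}$ be a partition of $V(H)$ into $n$ sets of size $q$, chosen uniformly at random. Then with probability at least $1-2\exp(-\varepsilon^2 n/(16q))$ we have \[ |H_{\mathcal{Q}}|\ \ge\ \frac{\binom{n}{k}}{\binom{qn}{qk}}\,|H|-\varepsilon n^k. \]
   Context: $|H|$ denotes the number of edges of $H$. Given a partition $\mathcal{Q}=\{B_1,\dots,B_n\}$ of $V(H)$ into sets of size $q$, the squashed hypergraph $H_{\mathcal{Q}}$ is the $k$-uniform hypergraph on vertex set $\{1,\dots,n\}$ in which a $k$-set $I$ is an edge iff $\bigcup_{i\in I}B_i$ is an edge of $H$. *)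

theory Defs
  imports Complex_Main "HOL-Library.Disjoint_Sets"
begin

definition eq_partitions :: "'a set \<Rightarrow> nat \<Rightarrow> 'a set set set" where
  "eq_partitions V q = {P. (\<forall>B\<in>P. B \<subseteq> V \<and> card B = q) \<and> \<Union>P = V \<and> disjoint P}"

definition squash :: "'a set set \<Rightarrow> 'a set set \<Rightarrow> nat \<Rightarrow> 'a set set set" where
  "squash H P k = {I. I \<subseteq> P \<and> card I = k \<and> \<Union>I \<in> H}"

end

theory Submission
  imports Defs "HOL-Probability.Hoeffding"
begin

lemma finite_hoeffding:
  fixes Y :: "'b \<Rightarrow> real"
  assumes fin: "finite A" and ne: "A \<noteq> {}" and s0: "(\<Sum>x\<in>A. Y x) = 0"
    and bnd: "\<And>x. x \<in> A \<Longrightarrow> a \<le> Y x \<and> Y x \<le> b" and l: "l \<ge> 0"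
  shows "(\<Sum>x\<in>A. exp (l * Y x)) \<le> real (card A) * exp (l\<^sup>2 * (b - a)\<^sup>2 / 8)"
proof (cases "l = 0")
  case True thus ?thesis by simp
next
  case False
  hence lp: "l > 0" using l by simp
  interpret interval_bounded_random_variable "measure_pmf (pmf_of_set A)" Y a b
    by unfold_locales (auto simp: AE_measure_pmf_iff fin ne bnd)
  have E: "measure_pmf.expectation (pmf_of_set A) Y = 0" using fin ne s0 by (simp add: integral_pmf_of_set)
  have "nn_integral (measure_pmf (pmf_of_set A)) (\<lambda>x. exp (l * Y x)) \<le> ennreal (exp (l\<^sup>2 * (b - a)\<^sup>2 / 8))"
    by (rule Hoeffdings_lemma_nn_integral_0[OF lp E])
  also have "nn_integral (measure_pmf (pmf_of_set A)) (\<lambda>x. exp (l * Y x)) = (\<Sum>x\<in>A. ennreal (exp (l * Y x))) / card A"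
    using fin ne by (simp add: nn_integral_pmf_of_set)
  also have "(\<Sum>x\<in>A. ennreal (exp (l * Y x))) = ennreal (\<Sum>x\<in>A. exp (l * Y x))"
    by (simp add: sum_ennreal)
  finally have "ennreal (\<Sum>x\<in>A. exp (l * Y x)) / ennreal (real (card A)) \<le> ennreal (exp (l\<^sup>2 * (b - a)\<^sup>2 / 8))"
    by (simp add: ennreal_of_nat_eq_real_of_nat)
  hence "ennreal ((\<Sum>x\<in>A. exp (l * Y x)) / real (card A)) \<le> ennreal (exp (l\<^sup>2 * (b - a)\<^sup>2 / 8))"
  proof -
    have "ennreal ((\<Sum>x\<in>A. exp (l * Y x)) / real (card A)) = ennreal (\<Sum>x\<in>A. exp (l * Y x)) / ennreal (real (card A))"
      using fin ne by (intro divide_ennreal[symmetric]) (auto simp: card_gt_0_iff sum_nonneg)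
    thus ?thesis using \<open>ennreal (\<Sum>x\<in>A. exp (l * Y x)) / ennreal (real (card A)) \<le> _\<close> by simp
  qed
  hence "(\<Sum>x\<in>A. exp (l * Y x)) / real (card A) \<le> exp (l\<^sup>2 * (b - a)\<^sup>2 / 8)"
    by (subst (asm) ennreal_le_iff) auto
  thus ?thesis using fin ne by (simp add: divide_simps card_gt_0_iff mult.commute)
qed

definition cls :: "'b list set \<Rightarrow> 'b list \<Rightarrow> 'b list set" where
  "cls S p = {xs \<in> S. take (length p) xs = p}"

definition avg :: "'c set \<Rightarrow> ('c \<Rightarrow> real) \<Rightarrow> real" where
  "avg S g = (\<Sum>x\<in>S. g x) / real (card S)"

lemma cls_snoc:
  assumes "length xs > length p"
  shows "xs \<in> cls S (p @ [a]) \<longleftrightarrow> xs \<in> cls S p \<and> xs ! length p = a"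
  using assms by (auto simp: cls_def take_Suc_conv_app_nth)

lemma martingale_bound:
  fixes g :: "'b list \<Rightarrow> real"
  assumes fin: "finite S" and len: "\<And>xs. xs \<in> S \<Longrightarrow> length xs = L" and c: "c \<ge> 0"
    and bd: "\<And>p a b. cls S (p @ [a]) \<noteq> {} \<Longrightarrow> cls S (p @ [b]) \<noteq> {} \<Longrightarrow>
               \<bar>avg (cls S (p @ [a])) g - avg (cls S (p @ [b])) g\<bar> \<le> c"
    and l: "l \<ge> 0"
  shows "length p + r = L \<Longrightarrow> cls S p \<noteq> {} \<Longrightarrow>
    (\<Sum>xs\<in>cls S p. exp (l * (avg (cls S p) g - g xs))) \<le> real (card (cls S p)) * exp (l\<^sup>2 * c\<^sup>2 * real r / 8)"
proof (induction r arbitrary: p)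
  case 0
  have "cls S p = {p}"
  proof -
    have "xs = p" if "xs \<in> cls S p" for xs using that len[of xs] 0 by (auto simp: cls_def)
    with 0(2) show ?thesis by blast
  qed
  thus ?case by (simp add: avg_def)
next
  case (Suc r)
  define C where "C = cls S p"
  define lp where "lp = length p"
  have finC: "finite C" using fin by (simp add: C_def cls_def)
  have neC: "C \<noteq> {}" using Suc.prems C_def by simp
  have lenC: "length xs = lp + Suc r" if "xs \<in> C" for xs using that len Suc.prems(1) by (auto simp: C_def cls_def lp_def)
  define key where "key xs = xs ! lp" for xs :: "'b list"
  define D where "D a = cls S (p @ [a])" for a
  have D_eq: "D a = {xs \<in> C. key xs = a}" for a
  proof -
    have "xs \<in> D a \<longleftrightarrow> xs \<in> C \<and> key xs = a" for xs
    proof (cases "xs \<in> S")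
      case True
      then show ?thesis using cls_snoc[of p xs S a] len[OF True] Suc.prems(1)
        by (auto simp: D_def C_def key_def lp_def)
    next
      case False
      then show ?thesis by (auto simp: D_def C_def cls_def)
    qed
    thus ?thesis by auto
  qed
  define \<mu> where "\<mu> = avg C g"
  define \<nu> where "\<nu> xs = avg (D (key xs)) g" for xs
  define Y where "Y xs = \<mu> - \<nu> xs" for xs
  define E where "E = exp (l\<^sup>2 * c\<^sup>2 * real r / 8)"
  have Dne: "D (key xs) \<noteq> {}" if "xs \<in> C" for xs using that D_eq by auto
  have finD: "finite (D a)" for a using finC D_eq by simp
  have grp: "(\<Sum>xs\<in>C. h xs) = (\<Sum>a\<in>key ` C. \<Sum>xs\<in>D a. h xs)" for h :: "'b list \<Rightarrow> real"
    using sum.group[OF finC _ subset_refl, of key h] finC by (simp add: D_eq)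
  have sumnu: "(\<Sum>xs\<in>C. \<nu> xs) = (\<Sum>xs\<in>C. g xs)"
  proof -
    have "(\<Sum>xs\<in>C. \<nu> xs) = (\<Sum>a\<in>key ` C. \<Sum>xs\<in>D a. avg (D a) g)"
      unfolding grp by (intro sum.cong refl) (auto simp: \<nu>_def D_eq)
    also have "\<dots> = (\<Sum>a\<in>key ` C. \<Sum>xs\<in>D a. g xs)"
    proof (rule sum.cong[OF refl])
      fix a assume "a \<in> key ` C"
      hence "D a \<noteq> {}" using D_eq by auto
      hence "card (D a) > 0" using finD by (simp add: card_gt_0_iff)
      thus "(\<Sum>xs\<in>D a. avg (D a) g) = (\<Sum>xs\<in>D a. g xs)" by (simp add: avg_def)
    qed
    also have "\<dots> = (\<Sum>xs\<in>C. g xs)" using grp by simp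
    finally show ?thesis .
  qed
  have sumY: "(\<Sum>xs\<in>C. Y xs) = 0"
  proof -
    have "card C > 0" using finC neC by (simp add: card_gt_0_iff)
    thus ?thesis by (simp add: Y_def sum_subtractf sumnu \<mu>_def avg_def)
  qed
  define T where "T = \<nu> ` C"
  have finT: "finite T" "T \<noteq> {}" using finC neC by (auto simp: T_def)
  have rng: "Max T - Min T \<le> c"
  proof -
    obtain x1 where x1: "x1 \<in> C" "Max T = \<nu> x1" using Max_in[OF finT] by (auto simp: T_def)
    obtain x2 where x2: "x2 \<in> C" "Min T = \<nu> x2" using Min_in[OF finT] by (auto simp: T_def)
    have "\<bar>\<nu> x1 - \<nu> x2\<bar> \<le> c"
      using bd[of p "key x1" "key x2"] Dne[OF x1(1)] Dne[OF x2(1)] by (simp add: \<nu>_def D_def)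
    thus ?thesis using x1 x2 by simp
  qed
  have Ybnd: "\<mu> - Max T \<le> Y xs \<and> Y xs \<le> \<mu> - Min T" if "xs \<in> C" for xs
    using that finT by (auto simp: Y_def T_def)
  have hoef: "(\<Sum>xs\<in>C. exp (l * Y xs)) \<le> real (card C) * exp (l\<^sup>2 * c\<^sup>2 / 8)"
  proof -
    have "(\<Sum>xs\<in>C. exp (l * Y xs)) \<le> real (card C) * exp (l\<^sup>2 * ((\<mu> - Min T) - (\<mu> - Max T))\<^sup>2 / 8)"
      by (rule finite_hoeffding[OF finC neC sumY Ybnd l])
    also have "\<dots> \<le> real (card C) * exp (l\<^sup>2 * c\<^sup>2 / 8)"
    proof -
      have "Min T \<le> Max T" using finT by simp
      hence "((\<mu> - Min T) - (\<mu> - Max T))\<^sup>2 \<le> c\<^sup>2" using rng by (intro power_mono) auto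
      hence "l\<^sup>2 * ((\<mu> - Min T) - (\<mu> - Max T))\<^sup>2 / 8 \<le> l\<^sup>2 * c\<^sup>2 / 8"
        by (intro divide_right_mono mult_left_mono) auto
      thus ?thesis by (intro mult_left_mono) auto
    qed
    finally show ?thesis .
  qed
  have IH: "(\<Sum>xs\<in>D a. exp (l * (avg (D a) g - g xs))) \<le> real (card (D a)) * E" if "a \<in> key ` C" for a
  proof -
    have "D a \<noteq> {}" using that D_eq by auto
    thus ?thesis using Suc.IH[of "p @ [a]"] Suc.prems(1) by (simp add: D_def E_def)
  qed
  have "(\<Sum>xs\<in>C. exp (l * (\<mu> - g xs))) = (\<Sum>xs\<in>C. exp (l * Y xs) * exp (l * (\<nu> xs - g xs)))"
    by (intro sum.cong refl) (simp add: Y_def flip: exp_add; simp add: algebra_simps)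
  also have "\<dots> = (\<Sum>a\<in>key ` C. \<Sum>xs\<in>D a. exp (l * (\<mu> - avg (D a) g)) * exp (l * (avg (D a) g - g xs)))"
    unfolding grp by (intro sum.cong refl) (auto simp: Y_def \<nu>_def D_eq)
  also have "\<dots> = (\<Sum>a\<in>key ` C. exp (l * (\<mu> - avg (D a) g)) * (\<Sum>xs\<in>D a. exp (l * (avg (D a) g - g xs))))"
    by (simp add: sum_distrib_left)
  also have "\<dots> \<le> (\<Sum>a\<in>key ` C. exp (l * (\<mu> - avg (D a) g)) * (real (card (D a)) * E))"
    by (intro sum_mono mult_left_mono IH) auto
  also have "\<dots> = E * (\<Sum>a\<in>key ` C. \<Sum>xs\<in>D a. exp (l * (\<mu> - avg (D a) g)))"
    by (simp add: sum_distrib_left mult_ac)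
  also have "\<dots> = E * (\<Sum>xs\<in>C. exp (l * Y xs))"
    unfolding grp by (intro arg_cong[where f = "\<lambda>x. E * x"] sum.cong refl) (auto simp: Y_def \<nu>_def D_eq)
  also have "\<dots> \<le> E * (real (card C) * exp (l\<^sup>2 * c\<^sup>2 / 8))"
    by (intro mult_left_mono hoef) (simp add: E_def)
  also have "\<dots> = real (card C) * exp (l\<^sup>2 * c\<^sup>2 * real (Suc r) / 8)"
    by (simp add: E_def mult_ac flip: exp_add) (simp add: algebra_simps add_divide_distrib)
  finally show ?case by (simp add: C_def \<mu>_def)
qed

lemma EP_facts:
  assumes P: "P \<in> eq_partitions V q" and fin: "finite V" and q: "q > 0"
  shows "finite P" "card V = q * card P"
proof -
  have sub: "P \<subseteq> Pow V" using P by (auto simp: eq_partitions_def)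
  thus fP: "finite P" using fin by (meson finite_Pow_iff finite_subset)
  have "card V = card (\<Union>P)" using P by (simp add: eq_partitions_def)
  also have "\<dots> = sum card P"
  proof (rule card_Union_disjoint)
    show "pairwise disjnt P" using P by (simp add: eq_partitions_def)
    show "finite A" if "A \<in> P" for A
    proof -
      have "A \<subseteq> V" using that sub by blast
      thus ?thesis using fin by (rule finite_subset)
    qed
  qed
  also have "\<dots> = sum (\<lambda>_. q) P" using P by (intro sum.cong) (auto simp: eq_partitions_def)
  finally show "card V = q * card P" by simp
qed

lemma EP_unique:
  assumes P: "P \<in> eq_partitions V q" and "B1 \<in> P" "B2 \<in> P" "x \<in> B1" "x \<in> B2"
  shows "B1 = B2"
proof (rule ccontr)
  assume "B1 \<noteq> B2"
  hence "disjnt B1 B2" using assms by (auto simp: eq_partitions_def pairwise_def)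
  thus False using assms by (auto simp: disjnt_def)
qed

lemma EP_Union_inj:
  assumes P: "P \<in> eq_partitions V q" and q: "q > 0" and I: "I \<subseteq> P" and J: "J \<subseteq> P" and eq: "\<Union>I = \<Union>J"
  shows "I = J"
proof -
  have ne: "B \<noteq> {}" if "B \<in> P" for B
    using P that q by (auto simp: eq_partitions_def)
  have "I \<subseteq> J" if I: "I \<subseteq> P" and J: "J \<subseteq> P" and eq: "\<Union>I = \<Union>J" for I J
  proof
    fix B assume B: "B \<in> I"
    then obtain x where x: "x \<in> B" using ne I by blast
    then obtain B' where "B' \<in> J" "x \<in> B'" using eq B by blast
    moreover have "B = B'" using EP_unique[OF P, of B B' x] B x I J \<open>B' \<in> J\<close> \<open>x \<in> B'\<close> by blast
    ultimately show "B \<in> J" by simp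
  qed
  from this[OF I J eq] this[OF J I eq[symmetric]] show ?thesis by (rule subset_antisym)
qed

lemma EP_card_Union:
  assumes P: "P \<in> eq_partitions V q" and fin: "finite V" and I: "I \<subseteq> P"
  shows "card (\<Union>I) = q * card I"
proof -
  have sub: "P \<subseteq> Pow V" using P by (auto simp: eq_partitions_def)
  have "card (\<Union>I) = sum card I"
  proof (rule card_Union_disjoint)
    show "pairwise disjnt I" using P I by (auto simp: eq_partitions_def intro: pairwise_subset)
    show "finite A" if "A \<in> I" for A
    proof -
      have "A \<subseteq> V" using that I sub by blast
      thus ?thesis using fin by (rule finite_subset)
    qed
  qed
  also have "\<dots> = sum (\<lambda>_. q) I" using P I by (intro sum.cong) (auto simp: eq_partitions_def)
  finally show ?thesis by simp
qed

definition Om :: "'a set \<Rightarrow> 'a list set" where "Om V = {xs. distinct xs \<and> set xs = V}"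
definition chunk :: "nat \<Rightarrow> 'a list \<Rightarrow> nat \<Rightarrow> 'a set" where
  "chunk q xs j = (\<lambda>i. xs ! i) ` {j*q..<j*q+q}"
definition prt :: "nat \<Rightarrow> nat \<Rightarrow> 'a list \<Rightarrow> 'a set set" where
  "prt q n xs = chunk q xs ` {..<n}"

lemma Om_len: "xs \<in> Om V \<Longrightarrow> length xs = card V"
  by (auto simp: Om_def distinct_card)

lemma finite_Om: assumes "finite V" shows "finite (Om V)"
proof -
  have "finite {xs. set xs \<subseteq> V \<and> length xs \<le> card V}" using assms by (rule finite_lists_length_le)
  moreover have "Om V \<subseteq> {xs. set xs \<subseteq> V \<and> length xs \<le> card V}" using Om_len by (fastforce simp: Om_def)
  ultimately show ?thesis by (rule finite_subset[rotated])
qed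

lemma Om_ne: "finite V \<Longrightarrow> Om V \<noteq> {}"
  using finite_distinct_list by (auto simp: Om_def)

lemma chunk_bound: fixes j n q :: nat assumes "j < n" shows "j*q+q \<le> q*n"
proof -
  have "(j+1)*q \<le> n*q" using assms by (intro mult_right_mono) auto
  thus ?thesis by (simp add: algebra_simps)
qed

lemma chunk_map:
  assumes "j*q+q \<le> length xs"
  shows "chunk q (map f xs) j = f ` chunk q xs j"
  unfolding chunk_def image_image using assms by (intro image_cong refl) auto

lemma prt_map:
  assumes "length xs = q*n"
  shows "prt q n (map f xs) = (\<lambda>B. f ` B) ` prt q n xs"
proof -
  have *: "chunk q (map f xs) j = f ` chunk q xs j" if "j \<in> {..<n}" for j
    by (rule chunk_map) (use chunk_bound[of j n q] that assms in auto)
  show ?thesis unfolding prt_def image_image by (rule image_cong[OF refl *])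
qed

lemma chunk_card:
  assumes "distinct xs" "length xs = q*n" "j < n"
  shows "card (chunk q xs j) = q"
proof -
  have "inj_on (nth xs) {j*q..<j*q+q}"
    using assms chunk_bound[OF assms(3), of q] by (intro inj_on_nth) auto
  thus ?thesis by (simp add: chunk_def card_image)
qed

lemma chunk_disj:
  assumes d: "distinct xs" and l: "length xs = q*n" and j: "j < n" "j' < n" "j \<noteq> j'"
  shows "chunk q xs j \<inter> chunk q xs j' = {}"
proof (rule ccontr)
  assume "chunk q xs j \<inter> chunk q xs j' \<noteq> {}"
  then obtain x where x1: "x \<in> chunk q xs j" and x2: "x \<in> chunk q xs j'" by blast
  obtain i where i1: "x = xs ! i" "i \<in> {j*q..<j*q+q}" using x1 unfolding chunk_def by (rule imageE)
  obtain i' where i2: "x = xs ! i'" "i' \<in> {j'*q..<j'*q+q}" using x2 unfolding chunk_def by (rule imageE)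
  have ii: "i \<in> {j*q..<j*q+q}" "i' \<in> {j'*q..<j'*q+q}" "xs ! i = xs ! i'" using i1 i2 by auto
  have "i < length xs" "i' < length xs" using ii chunk_bound[OF j(1), of q] chunk_bound[OF j(2), of q] l by auto
  hence "i = i'" using ii d by (simp add: nth_eq_iff_index_eq)
  show False
  proof (cases "j < j'")
    case True
    hence "(j+1)*q \<le> j'*q" by (intro mult_right_mono) auto
    thus False using ii \<open>i = i'\<close> by (simp add: algebra_simps)
  next
    case False
    hence "(j'+1)*q \<le> j*q" using j by (intro mult_right_mono) auto
    thus False using ii \<open>i = i'\<close> by (simp add: algebra_simps)
  qed
qed

lemma chunk_cover:
  assumes l: "length xs = q*n" and q: "q > 0" and i: "i < length xs"
  shows "xs ! i \<in> chunk q xs (i div q) \<and> i div q < n"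
proof -
  have "i div q < n" using i l by (simp add: less_mult_imp_div_less mult.commute)
  moreover have "i div q * q \<le> i" by (simp add: div_times_less_eq_dividend)
  moreover have "i < i div q * q + q"
    using q by (metis add_less_cancel_left div_mult_mod_eq mod_less_divisor)
  ultimately show ?thesis by (auto simp: chunk_def)
qed

lemma prt_EP:
  assumes xs: "xs \<in> Om V" and l: "length xs = q*n" and q: "q > 0"
  shows "prt q n xs \<in> eq_partitions V q"
proof -
  have d: "distinct xs" and s: "set xs = V" using xs by (auto simp: Om_def)
  have sub: "chunk q xs j \<subseteq> V" if "j < n" for j
    using chunk_bound[OF that, of q] l s by (auto simp: chunk_def)
  have "\<Union>(prt q n xs) = V"
  proof
    show "\<Union>(prt q n xs) \<subseteq> V" using sub by (auto simp: prt_def)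
    show "V \<subseteq> \<Union>(prt q n xs)"
    proof
      fix x assume "x \<in> V"
      then obtain i where "i < length xs" "x = xs ! i" using s by (auto simp: in_set_conv_nth)
      thus "x \<in> \<Union>(prt q n xs)" using chunk_cover[OF l q] by (auto simp: prt_def)
    qed
  qed
  moreover have "disjoint (prt q n xs)"
    unfolding pairwise_def prt_def disjnt_def using chunk_disj[OF d l] by auto
  ultimately show ?thesis using sub chunk_card[OF d l]
    by (auto simp: eq_partitions_def prt_def)
qed

lemma concat_nth:
  assumes "\<forall>l\<in>set Ls. length l = q" "j < length Ls" "i < q"
  shows "concat Ls ! (j*q+i) = Ls ! j ! i"
  using assms
proof (induction Ls arbitrary: j)
  case Nil thus ?case by simp
next
  case (Cons l Ls)
  show ?case
  proof (cases j)
    case 0 thus ?thesis using Cons.prems by (simp add: nth_append)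
  next
    case (Suc j')
    have lq: "length l = q" using Cons.prems by simp
    have "concat (l # Ls) ! (j*q+i) = (l @ concat Ls) ! (length l + (j'*q+i))"
      using Suc lq by (simp add: algebra_simps)
    also have "\<dots> = concat Ls ! (j'*q+i)" by (rule nth_append_length_plus)
    also have "\<dots> = Ls ! j' ! i" using Cons Suc by simp
    finally show ?thesis using Suc by simp
  qed
qed

lemma length_concat_const:
  "\<forall>l\<in>set Ls. length l = q \<Longrightarrow> length (concat Ls) = q * length Ls"
  by (induction Ls) auto

lemma prt_surj:
  assumes P: "P \<in> eq_partitions V q" and fin: "finite V" and q: "q > 0" and cV: "card V = q*n"
  shows "\<exists>xs\<in>Om V. prt q n xs = P"
proof -
  have fP: "finite P" and cP: "card P = n" using EP_facts[OF P fin q] cV q by auto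
  obtain Bs where Bs: "set Bs = P" "distinct Bs" using finite_distinct_list[OF fP] by blast
  have lenBs: "length Bs = n" using Bs cP distinct_card by fastforce
  have "\<forall>B\<in>P. \<exists>l. set l = B \<and> distinct l"
  proof
    fix B assume "B \<in> P"
    hence "B \<subseteq> V" using P by (simp add: eq_partitions_def)
    hence "finite B" using fin by (rule finite_subset)
    thus "\<exists>l. set l = B \<and> distinct l" by (rule finite_distinct_list)
  qed
  then obtain lf where lf: "\<And>B. B \<in> P \<Longrightarrow> set (lf B) = B \<and> distinct (lf B)" by metis
  have lfl: "length (lf B) = q" if "B \<in> P" for B
  proof -
    have "card B = q" using P that by (simp add: eq_partitions_def)
    thus ?thesis using lf[OF that] distinct_card by metis
  qed
  define Ls where "Ls = map lf Bs"
  define xs where "xs = concat Ls"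
  have Lsl: "\<forall>l\<in>set Ls. length l = q" using lfl Bs by (auto simp: Ls_def)
  have injlf: "inj_on lf P" using lf by (metis inj_onI)
  have dLs: "distinct Ls" using Bs injlf by (simp add: Ls_def distinct_map)
  have dxs: "distinct xs" unfolding xs_def
  proof (rule distinct_concat[OF dLs])
    fix ys assume "ys \<in> set Ls" thus "distinct ys" using lf Bs by (auto simp: Ls_def)
  next
    fix ys zs assume yz: "ys \<in> set Ls" "zs \<in> set Ls" "ys \<noteq> zs"
    then obtain B C where BC: "B \<in> P" "C \<in> P" "ys = lf B" "zs = lf C" using Bs by (auto simp: Ls_def)
    moreover have "B \<noteq> C" using BC yz by auto
    moreover have "disjnt B C" using P BC \<open>B \<noteq> C\<close> by (auto simp: eq_partitions_def pairwise_def)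
    ultimately show "set ys \<inter> set zs = {}" using lf by (simp add: disjnt_def)
  qed
  have sxs: "set xs = V"
  proof -
    have "set xs = \<Union>(set ` set Ls)" by (simp add: xs_def)
    also have "\<dots> = \<Union>P" using lf Bs by (auto simp: Ls_def)
    also have "\<dots> = V" using P by (simp add: eq_partitions_def)
    finally show ?thesis .
  qed
  have lxs: "length xs = q*n" using length_concat_const[OF Lsl] lenBs by (simp add: xs_def Ls_def)
  have ch: "chunk q xs j = Bs ! j" if j: "j < n" for j
  proof -
    have rng: "{j*q..<j*q+q} = (\<lambda>i. j*q+i) ` {..<q}"
    proof (intro set_eqI iffI)
      fix x assume "x \<in> {j*q..<j*q+q}"
      thus "x \<in> (\<lambda>i. j*q+i) ` {..<q}" by (intro image_eqI[of _ _ "x - j*q"]) auto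
    qed auto
    have "chunk q xs j = (\<lambda>i. xs ! (j*q+i)) ` {..<q}"
      unfolding chunk_def rng image_image ..
    also have "\<dots> = (\<lambda>i. lf (Bs!j) ! i) ` {..<q}"
      using concat_nth[OF Lsl] j lenBs by (intro image_cong refl) (auto simp: xs_def Ls_def)
    also have "\<dots> = set (lf (Bs!j))" using lfl[of "Bs!j"] j lenBs Bs by (auto simp: set_conv_nth)
    also have "\<dots> = Bs ! j" using lf[of "Bs!j"] j lenBs Bs by auto
    finally show ?thesis .
  qed
  have "prt q n xs = P"
  proof -
    have "prt q n xs = (\<lambda>j. Bs ! j) ` {..<n}" unfolding prt_def using ch by (intro image_cong) auto
    also have "\<dots> = set Bs" using lenBs by (auto simp: set_conv_nth)
    finally show ?thesis using Bs by simp
  qed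
  moreover have "xs \<in> Om V" using dxs sxs by (simp add: Om_def)
  ultimately show ?thesis by blast
qed

lemma Om_map:
  assumes \<sigma>: "bij_betw \<sigma> V V" and zs: "zs \<in> Om V"
  shows "map \<sigma> zs \<in> Om V"
proof -
  have "inj_on \<sigma> V" "\<sigma> ` V = V" using \<sigma> by (auto simp: bij_betw_def)
  moreover have "distinct zs" "set zs = V" using zs by (auto simp: Om_def)
  ultimately show ?thesis by (simp add: Om_def distinct_map)
qed

lemma inj_map_Om:
  assumes \<sigma>: "bij_betw \<sigma> V V"
  shows "inj_on (map \<sigma>) (Om V)"
proof (rule inj_onI)
  fix xs ys assume "xs \<in> Om V" "ys \<in> Om V" "map \<sigma> xs = map \<sigma> ys"
  moreover have "inj_on \<sigma> V" using \<sigma> by (simp add: bij_betw_def)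
  ultimately show "xs = ys" using inj_on_map_eq_map[of \<sigma> xs ys] by (simp add: Om_def)
qed

definition swp :: "'a \<Rightarrow> 'a \<Rightarrow> 'a \<Rightarrow> 'a" where
  "swp a b x = (if x = a then b else if x = b then a else x)"

lemma swp_swp[simp]: "swp a b (swp a b x) = x" by (simp add: swp_def)
lemma swp_comm: "swp a b = swp b a" by (rule ext) (simp add: swp_def)
lemma map_swp_swp[simp]: "map (swp a b) (map (swp a b) xs) = xs" by (induction xs) auto

lemma swp_bij:
  assumes "a \<in> V" "b \<in> V"
  shows "bij_betw (swp a b) V V"
proof (rule bij_betw_byWitness[where f' = "swp a b"])
  show "\<forall>x\<in>V. swp a b (swp a b x) = x" by simp
  show "\<forall>x\<in>V. swp a b (swp a b x) = x" by simp
  show "swp a b ` V \<subseteq> V" using assms by (auto simp: swp_def)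
  show "swp a b ` V \<subseteq> V" using assms by (auto simp: swp_def)
qed

lemma finite_squash: "finite P \<Longrightarrow> finite (squash H P k)"
proof -
  assume "finite P"
  moreover have "squash H P k \<subseteq> Pow P" by (auto simp: squash_def)
  moreover have "finite (Pow P)" using \<open>finite P\<close> by simp
  ultimately show ?thesis by (meson finite_subset)
qed

lemma squash_mono: "P0 \<subseteq> P \<Longrightarrow> squash H P0 k \<subseteq> squash H P k"
  by (auto simp: squash_def)

lemma choose_le_pow: "(n::nat) choose r \<le> n ^ r"
proof (cases "r \<le> n")
  case True thus ?thesis by (rule binomial_le_pow)
next
  case False thus ?thesis by (simp add: binomial_eq_0)
qed

lemma squash_bound:
  assumes fP: "finite P" and P0: "P0 \<subseteq> P" and k: "k \<ge> 1"
  shows "card (squash H P k) \<le> card (squash H P0 k) + card (P - P0) * card P ^ (k - 1)"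
proof -
  define A where "A B = {I. I \<subseteq> P \<and> card I = k \<and> B \<in> I}" for B
  have sub: "squash H P k \<subseteq> squash H P0 k \<union> (\<Union>B\<in>P - P0. A B)"
  proof
    fix I assume I: "I \<in> squash H P k"
    show "I \<in> squash H P0 k \<union> (\<Union>B\<in>P - P0. A B)"
    proof (cases "I \<subseteq> P0")
      case True thus ?thesis using I by (auto simp: squash_def)
    next
      case False
      then obtain B where "B \<in> I" "B \<notin> P0" by blast
      thus ?thesis using I by (auto simp: squash_def A_def)
    qed
  qed
  have cA: "card (A B) \<le> card P ^ (k-1)" if B: "B \<in> P" for B
  proof -
    have "card (A B) \<le> card {J. J \<subseteq> P - {B} \<and> card J = k - 1}"
    proof (rule card_inj_on_le[where f = "\<lambda>I. I - {B}"])
      show "inj_on (\<lambda>I. I - {B}) (A B)"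
      proof (rule inj_onI)
        fix I I' assume "I \<in> A B" "I' \<in> A B" "I - {B} = I' - {B}"
        thus "I = I'" by (auto simp: A_def)
      qed
      show "(\<lambda>I. I - {B}) ` A B \<subseteq> {J. J \<subseteq> P - {B} \<and> card J = k - 1}"
      proof
        fix J assume "J \<in> (\<lambda>I. I - {B}) ` A B"
        then obtain I where I: "I \<in> A B" "J = I - {B}" by blast
        have "I \<subseteq> P" using I by (simp add: A_def)
        hence "finite I" using fP by (rule finite_subset)
        thus "J \<in> {J. J \<subseteq> P - {B} \<and> card J = k - 1}" using I by (auto simp: A_def)
      qed
      have "{J. J \<subseteq> P - {B} \<and> card J = k - 1} \<subseteq> Pow P" by auto
      moreover have "finite (Pow P)" using fP by simp
      ultimately show "finite {J. J \<subseteq> P - {B} \<and> card J = k - 1}" by (rule finite_subset)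
    qed
    also have "\<dots> = card (P - {B}) choose (k - 1)" using fP by (intro n_subsets) simp
    also have "\<dots> \<le> card (P - {B}) ^ (k - 1)" by (rule choose_le_pow)
    also have "\<dots> \<le> card P ^ (k - 1)" using fP by (intro power_mono card_mono) auto
    finally show ?thesis .
  qed
  have "card (squash H P k) \<le> card (squash H P0 k \<union> (\<Union>B\<in>P - P0. A B))"
  proof (rule card_mono[OF _ sub])
    have "finite P0" using P0 fP by (rule finite_subset)
    hence "finite (squash H P0 k)" by (rule finite_squash)
    moreover have "finite (\<Union>B\<in>P - P0. A B)"
    proof (rule finite_subset)
      show "(\<Union>B\<in>P - P0. A B) \<subseteq> Pow P" by (auto simp: A_def)
      show "finite (Pow P)" using fP by simp
    qed
    ultimately show "finite (squash H P0 k \<union> (\<Union>B\<in>P - P0. A B))" by simp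
  qed
  also have "\<dots> \<le> card (squash H P0 k) + card (\<Union>B\<in>P - P0. A B)" by (rule card_Un_le)
  also have "card (\<Union>B\<in>P - P0. A B) \<le> (\<Sum>B\<in>P - P0. card (A B))" using fP by (intro card_UN_le) simp
  also have "\<dots> \<le> (\<Sum>B\<in>P - P0. card P ^ (k - 1))" using cA by (intro sum_mono) simp
  also have "\<dots> = card (P - P0) * card P ^ (k - 1)" by simp
  finally show ?thesis by simp
qed

lemma card_containing_le1:
  assumes P: "P \<in> eq_partitions V q" and fP: "finite P"
  shows "card {B\<in>P. x \<in> B} \<le> 1"
proof -
  have "finite {B\<in>P. x \<in> B}" using fP by simp
  moreover have "\<forall>B1\<in>{B\<in>P. x \<in> B}. \<forall>B2\<in>{B\<in>P. x \<in> B}. B1 = B2"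
  proof (intro ballI)
    fix B1 B2 assume "B1 \<in> {B\<in>P. x \<in> B}" "B2 \<in> {B\<in>P. x \<in> B}"
    thus "B1 = B2" using EP_unique[OF P, of B1 B2 x] by simp
  qed
  ultimately have "card {B\<in>P. x \<in> B} \<le> Suc 0" by (simp only: card_le_Suc0_iff_eq)
  thus ?thesis by simp
qed

lemma swap_bound:
  assumes xs: "xs \<in> Om V" and fin: "finite V" and cV: "card V = q*n" and q: "q > 0"
    and a: "a \<in> V" and b: "b \<in> V" and k: "k \<ge> 1"
  shows "card (squash H (prt q n xs) k) \<le> card (squash H (prt q n (map (swp a b) xs)) k) + 2 * n ^ (k - 1)"
proof -
  define s where "s = swp a b"
  define P where "P = prt q n xs"
  define P' where "P' = prt q n (map s xs)"
  define P0 where "P0 = {B\<in>P. a \<notin> B \<and> b \<notin> B}"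
  have lx: "length xs = q*n" using Om_len[OF xs] cV by simp
  have PE: "P \<in> eq_partitions V q" using prt_EP[OF xs lx q] by (simp add: P_def)
  have fP: "finite P" and cP: "card P = n" using EP_facts[OF PE fin q] cV q by auto
  have P'eq: "P' = (\<lambda>B. s ` B) ` P" using prt_map[OF lx] by (simp add: P'_def P_def)
  have sB: "s ` B = B" if "a \<notin> B" "b \<notin> B" for B
  proof -
    have "s ` B = id ` B" using that by (intro image_cong) (auto simp: s_def swp_def)
    thus ?thesis by simp
  qed
  have P0sub: "P0 \<subseteq> P'"
  proof
    fix B assume "B \<in> P0"
    hence "B \<in> P" "s ` B = B" using sB by (auto simp: P0_def)
    thus "B \<in> P'" unfolding P'eq by (metis image_eqI)
  qed
  have P0P: "P0 \<subseteq> P" by (auto simp: P0_def)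
  have "P - P0 \<subseteq> {B\<in>P. a\<in>B} \<union> {B\<in>P. b\<in>B}" by (auto simp: P0_def)
  hence "card (P - P0) \<le> card ({B\<in>P. a\<in>B} \<union> {B\<in>P. b\<in>B})" using fP by (intro card_mono) auto
  also have "\<dots> \<le> card {B\<in>P. a\<in>B} + card {B\<in>P. b\<in>B}" by (rule card_Un_le)
  also have "\<dots> \<le> 2" using card_containing_le1[OF PE fP, of a] card_containing_le1[OF PE fP, of b] by simp
  finally have c2: "card (P - P0) \<le> 2" .
  have fP': "finite P'" using fP P'eq by simp
  have "card (squash H P k) \<le> card (squash H P0 k) + card (P - P0) * card P ^ (k - 1)"
    by (rule squash_bound[OF fP P0P k])
  also have "card (P - P0) * card P ^ (k - 1) \<le> 2 * n ^ (k - 1)" using c2 cP by (simp add: mult_right_mono)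
  also have "card (squash H P0 k) \<le> card (squash H P' k)"
    by (intro card_mono finite_squash fP' squash_mono P0sub)
  finally show ?thesis by (simp add: P_def P'_def s_def)
qed

lemma swap_diff:
  assumes xs: "xs \<in> Om V" and fin: "finite V" and cV: "card V = q*n" and q: "q > 0"
    and a: "a \<in> V" and b: "b \<in> V" and k: "k \<ge> 1"
  shows "\<bar>real (card (squash H (prt q n xs) k)) - real (card (squash H (prt q n (map (swp a b) xs)) k))\<bar> \<le> 2 * real n ^ (k - 1)"
proof -
  have xs': "map (swp a b) xs \<in> Om V" by (rule Om_map[OF swp_bij[OF a b] xs])
  have 1: "card (squash H (prt q n xs) k) \<le> card (squash H (prt q n (map (swp a b) xs)) k) + 2 * n ^ (k - 1)"
    by (rule swap_bound[OF xs fin cV q a b k])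
  have 2: "card (squash H (prt q n (map (swp a b) xs)) k) \<le> card (squash H (prt q n xs) k) + 2 * n ^ (k - 1)"
    using swap_bound[OF xs' fin cV q a b k] unfolding map_swp_swp .
  have r1: "real (card (squash H (prt q n xs) k)) \<le> real (card (squash H (prt q n (map (swp a b) xs)) k)) + 2 * real n ^ (k - 1)"
    using of_nat_mono[OF 1, where 'a=real] by simp
  have r2: "real (card (squash H (prt q n (map (swp a b) xs)) k)) \<le> real (card (squash H (prt q n xs) k)) + 2 * real n ^ (k - 1)"
    using of_nat_mono[OF 2, where 'a=real] by simp
  show ?thesis using r1 r2 by linarith
qed

lemma avg_couple:
  fixes g :: "'b \<Rightarrow> real"
  assumes fA: "finite A" and neA: "A \<noteq> {}" and bij: "bij_betw \<phi> A B"
    and d: "\<And>x. x \<in> A \<Longrightarrow> \<bar>g x - g (\<phi> x)\<bar> \<le> c"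
  shows "\<bar>avg A g - avg B g\<bar> \<le> c"
proof -
  have cB: "card B = card A" using bij by (simp add: bij_betw_same_card)
  have sB: "(\<Sum>x\<in>B. g x) = (\<Sum>x\<in>A. g (\<phi> x))" using sum.reindex_bij_betw[OF bij, of g] by simp
  have cpos: "real (card A) > 0" using fA neA by (simp add: card_gt_0_iff)
  have "\<bar>avg A g - avg B g\<bar> = \<bar>(\<Sum>x\<in>A. g x - g (\<phi> x))\<bar> / real (card A)"
    using cpos by (simp add: avg_def cB sB sum_subtractf flip: diff_divide_distrib)
  also have "\<dots> \<le> (\<Sum>x\<in>A. \<bar>g x - g (\<phi> x)\<bar>) / real (card A)"
    using cpos by (intro divide_right_mono sum_abs) simp
  also have "\<dots> \<le> (\<Sum>x\<in>A. c) / real (card A)"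
    using cpos d by (intro divide_right_mono sum_mono) auto
  also have "\<dots> = c" using cpos by simp
  finally show ?thesis .
qed

lemma swp_o[simp]: "swp a b \<circ> swp a b = id" by (rule ext) simp

lemma cls_facts:
  assumes A: "xs \<in> cls (Om V) (p @ [a])"
  shows "xs \<in> Om V" "a \<in> V" "a \<notin> set p" "take (Suc (length p)) xs = p @ [a]"
proof -
  show xs: "xs \<in> Om V" and tk: "take (Suc (length p)) xs = p @ [a]" using A by (auto simp: cls_def)
  have d: "distinct xs" "set xs = V" using xs by (auto simp: Om_def)
  have "distinct (take (Suc (length p)) xs)" using d(1) by (rule distinct_take)
  hence "distinct (p @ [a])" using tk by simp
  thus "a \<notin> set p" by simp
  have "a \<in> set (take (Suc (length p)) xs)" using tk by simp
  hence "a \<in> set xs" by (rule in_set_takeD)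
  thus "a \<in> V" using d(2) by simp
qed

lemma cls_swap:
  assumes A: "xs \<in> cls (Om V) (p @ [a])" and b: "b \<in> V" "b \<notin> set p"
  shows "map (swp a b) xs \<in> cls (Om V) (p @ [b])"
proof -
  note F = cls_facts[OF A]
  have "map (swp a b) xs \<in> Om V" by (rule Om_map[OF swp_bij[OF F(2) b(1)] F(1)])
  moreover have "take (Suc (length p)) (map (swp a b) xs) = p @ [b]"
  proof -
    have "take (Suc (length p)) (map (swp a b) xs) = map (swp a b) (p @ [a])" by (simp add: take_map F(4))
    moreover have "map (swp a b) p = p"
    proof (rule map_idI)
      fix x assume "x \<in> set p" thus "swp a b x = x" using F(3) b(2) by (auto simp: swp_def)
    qed
    ultimately show ?thesis by (simp add: swp_def)
  qed
  ultimately show ?thesis by (simp add: cls_def)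
qed

lemma bd_Om:
  assumes fin: "finite V" and cV: "card V = q*n" and q: "q > 0" and k: "k \<ge> 1"
    and neA: "cls (Om V) (p @ [a]) \<noteq> {}" and neB: "cls (Om V) (p @ [b]) \<noteq> {}"
  shows "\<bar>avg (cls (Om V) (p @ [a])) (\<lambda>xs. real (card (squash H (prt q n xs) k)))
          - avg (cls (Om V) (p @ [b])) (\<lambda>xs. real (card (squash H (prt q n xs) k)))\<bar> \<le> 2 * real n ^ (k - 1)"
proof -
  obtain x0 where x0: "x0 \<in> cls (Om V) (p @ [a])" using neA by blast
  obtain y0 where y0: "y0 \<in> cls (Om V) (p @ [b])" using neB by blast
  note Fa = cls_facts[OF x0] and Fb = cls_facts[OF y0]
  show ?thesis
  proof (rule avg_couple)
    show "finite (cls (Om V) (p @ [a]))"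
      using finite_Om[OF fin] by (rule finite_subset[rotated]) (auto simp: cls_def)
    show "cls (Om V) (p @ [a]) \<noteq> {}" by fact
    show "bij_betw (map (swp a b)) (cls (Om V) (p @ [a])) (cls (Om V) (p @ [b]))"
    proof (rule bij_betw_byWitness[where f' = "map (swp a b)"])
      show "\<forall>x\<in>cls (Om V) (p @ [a]). map (swp a b) (map (swp a b) x) = x" by simp
      show "\<forall>x\<in>cls (Om V) (p @ [b]). map (swp a b) (map (swp a b) x) = x" by simp
      show "map (swp a b) ` cls (Om V) (p @ [a]) \<subseteq> cls (Om V) (p @ [b])"
        using cls_swap[OF _ Fb(2) Fb(3)] by blast
      show "map (swp a b) ` cls (Om V) (p @ [b]) \<subseteq> cls (Om V) (p @ [a])"
        using cls_swap[OF _ Fa(2) Fa(3), of _ b] by (auto simp: swp_comm[of a b])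
    qed
    fix xs assume "xs \<in> cls (Om V) (p @ [a])"
    hence "xs \<in> Om V" by (rule cls_facts(1))
    thus "\<bar>real (card (squash H (prt q n xs) k)) - real (card (squash H (prt q n (map (swp a b) xs)) k))\<bar> \<le> 2 * real n ^ (k - 1)"
      by (rule swap_diff[OF _ fin cV q Fa(2) Fb(2) k])
  qed
qed

lemma double_count:
  assumes "finite A" "finite B"
  shows "(\<Sum>x\<in>A. card {y\<in>B. R x y}) = (\<Sum>y\<in>B. card {x\<in>A. R x y})"
proof -
  have "(\<Sum>x\<in>A. card {y\<in>B. R x y}) = (\<Sum>x\<in>A. \<Sum>y\<in>{y\<in>B. R x y}. (1::nat))" by simp
  also have "\<dots> = (\<Sum>y\<in>B. \<Sum>x\<in>{x\<in>A. R x y}. (1::nat))" using assms by (rule sum.swap_restrict)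
  also have "\<dots> = (\<Sum>y\<in>B. card {x\<in>A. R x y})" by simp
  finally show ?thesis .
qed

definition U :: "nat \<Rightarrow> 'a set set \<Rightarrow> 'a set set" where
  "U k P = Union ` {I. I \<subseteq> P \<and> card I = k}"

lemma squash_card_U:
  assumes P: "P \<in> eq_partitions V q" and q: "q > 0"
  shows "card (squash H P k) = card {e\<in>H. e \<in> U k P}"
proof (rule bij_betw_same_card)
  show "bij_betw Union (squash H P k) {e\<in>H. e \<in> U k P}"
    unfolding bij_betw_def
  proof
    show "inj_on Union (squash H P k)"
    proof (rule inj_onI)
      fix I J assume "I \<in> squash H P k" "J \<in> squash H P k" "\<Union>I = \<Union>J"
      thus "I = J" using EP_Union_inj[OF P q] by (auto simp: squash_def)
    qed
    show "Union ` squash H P k = {e\<in>H. e \<in> U k P}" by (auto simp: squash_def U_def)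
  qed
qed

lemma card_U:
  assumes P: "P \<in> eq_partitions V q" and q: "q > 0" and fin: "finite V"
  shows "card (U k P) = card P choose k"
proof -
  have "inj_on Union {I. I \<subseteq> P \<and> card I = k}"
  proof (rule inj_onI)
    fix I J assume "I \<in> {I. I \<subseteq> P \<and> card I = k}" "J \<in> {I. I \<subseteq> P \<and> card I = k}" "\<Union>I = \<Union>J"
    thus "I = J" using EP_Union_inj[OF P q] by auto
  qed
  hence "card (U k P) = card {I. I \<subseteq> P \<and> card I = k}" by (simp add: U_def card_image)
  also have "\<dots> = card P choose k" using EP_facts(1)[OF P fin q] by (rule n_subsets)
  finally show ?thesis .
qed

lemma U_sub:
  assumes P: "P \<in> eq_partitions V q" and fin: "finite V"
  shows "U k P \<subseteq> {e. e \<subseteq> V \<and> card e = q*k}"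
proof
  fix e assume "e \<in> U k P"
  then obtain I where I: "I \<subseteq> P" "card I = k" "e = \<Union>I" by (auto simp: U_def)
  have "e \<subseteq> \<Union>P" using I by auto
  also have "\<Union>P = V" using P by (simp add: eq_partitions_def)
  finally have "e \<subseteq> V" .
  moreover have "card e = q*k" using EP_card_Union[OF P fin I(1)] I by simp
  ultimately show "e \<in> {e. e \<subseteq> V \<and> card e = q*k}" by simp
qed

lemma prt_EP':
  assumes xs: "xs \<in> Om V" and cV: "card V = q*n" and q: "q > 0"
  shows "prt q n xs \<in> eq_partitions V q"
  using prt_EP[OF xs _ q] Om_len[OF xs] cV by simp

lemma cnt_le:
  assumes fin: "finite V" and cV: "card V = q*n" and q: "q > 0"
    and e: "e \<subseteq> V" and e': "e' \<subseteq> V" and ce: "card e = card e'"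
  shows "card {xs\<in>Om V. e \<in> U k (prt q n xs)} \<le> card {xs\<in>Om V. e' \<in> U k (prt q n xs)}"
proof -
  have fe: "finite e" "finite e'" using e e' fin by (auto intro: finite_subset)
  obtain f1 where f1: "bij_betw f1 e e'" using finite_same_card_bij[OF fe ce] by blast
  have "card (V - e) = card (V - e')" using e e' fin ce fe by (simp add: card_Diff_subset)
  moreover have "finite (V - e)" "finite (V - e')" using fin by auto
  ultimately obtain f2 where f2: "bij_betw f2 (V - e) (V - e')" using finite_same_card_bij by blast
  define \<sigma> where "\<sigma> x = (if x \<in> e then f1 x else f2 x)" for x
  have b1: "bij_betw \<sigma> e e'" using f1 by (rule bij_betw_cong[THEN iffD1, rotated]) (simp add: \<sigma>_def)
  have b2: "bij_betw \<sigma> (V - e) (V - e')" using f2 by (rule bij_betw_cong[THEN iffD1, rotated]) (simp add: \<sigma>_def)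
  have "bij_betw \<sigma> (e \<union> (V - e)) (e' \<union> (V - e'))" by (rule bij_betw_combine[OF b1 b2]) auto
  moreover have "e \<union> (V - e) = V" "e' \<union> (V - e') = V" using e e' by auto
  ultimately have \<sigma>: "bij_betw \<sigma> V V" by simp
  have se: "\<sigma> ` e = e'" using b1 by (simp add: bij_betw_def)
  have injV: "inj_on \<sigma> V" using \<sigma> by (simp add: bij_betw_def)
  show ?thesis
  proof (rule card_inj_on_le[where f = "map \<sigma>"])
    show "inj_on (map \<sigma>) {xs\<in>Om V. e \<in> U k (prt q n xs)}"
      using inj_map_Om[OF \<sigma>] by (rule inj_on_subset) auto
    show "finite {xs\<in>Om V. e' \<in> U k (prt q n xs)}" using finite_Om[OF fin] by simp
    show "map \<sigma> ` {xs\<in>Om V. e \<in> U k (prt q n xs)} \<subseteq> {xs\<in>Om V. e' \<in> U k (prt q n xs)}"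
    proof
      fix ys assume "ys \<in> map \<sigma> ` {xs\<in>Om V. e \<in> U k (prt q n xs)}"
      then obtain zs where zs: "zs \<in> Om V" "e \<in> U k (prt q n zs)" "ys = map \<sigma> zs" by blast
      have ys: "ys \<in> Om V" using Om_map[OF \<sigma> zs(1)] zs(3) by simp
      obtain I where I: "I \<subseteq> prt q n zs" "card I = k" "e = \<Union>I" using zs(2) by (auto simp: U_def)
      have lz: "length zs = q*n" using Om_len[OF zs(1)] cV by simp
      have pm: "prt q n ys = (\<lambda>B. \<sigma> ` B) ` prt q n zs" using prt_map[OF lz] zs(3) by simp
      have PE: "prt q n zs \<in> eq_partitions V q" by (rule prt_EP'[OF zs(1) cV q])
      have IV: "I \<subseteq> Pow V" using I(1) PE by (auto simp: eq_partitions_def)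
      have injI: "inj_on (\<lambda>B. \<sigma> ` B) I" using inj_on_image_Pow[OF injV] IV by (rule inj_on_subset)
      have "e' = \<Union>((\<lambda>B. \<sigma> ` B) ` I)" using se I(3) by auto
      moreover have "(\<lambda>B. \<sigma> ` B) ` I \<subseteq> prt q n ys" using pm I(1) by auto
      moreover have "card ((\<lambda>B. \<sigma> ` B) ` I) = k" using card_image[OF injI] I(2) by simp
      ultimately have "e' \<in> U k (prt q n ys)" by (auto simp: U_def)
      thus "ys \<in> {xs\<in>Om V. e' \<in> U k (prt q n xs)}" using ys by simp
    qed
  qed
qed

lemma expect:
  assumes fin: "finite V" and cV: "card V = q*n" and q: "q > 0"
    and Hs: "\<forall>e\<in>H. e \<subseteq> V \<and> card e = q*k"
  shows "(\<Sum>xs\<in>Om V. card (squash H (prt q n xs) k)) * ((q*n) choose (q*k)) = card H * card (Om V) * (n choose k)"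
proof -
  define E where "E = {e. e \<subseteq> V \<and> card e = q*k}"
  define cnt where "cnt e = card {xs\<in>Om V. e \<in> U k (prt q n xs)}" for e
  have finOm: "finite (Om V)" by (rule finite_Om[OF fin])
  have finE: "finite E"
  proof (rule finite_subset)
    show "E \<subseteq> Pow V" by (auto simp: E_def)
    show "finite (Pow V)" using fin by simp
  qed
  have HE: "H \<subseteq> E" using Hs by (auto simp: E_def)
  have finH: "finite H" using finE HE by (rule finite_subset[rotated])
  have PE: "prt q n xs \<in> eq_partitions V q" if "xs \<in> Om V" for xs by (rule prt_EP'[OF that cV q])
  have cP: "card (prt q n xs) = n" if "xs \<in> Om V" for xs
    using EP_facts(2)[OF PE[OF that] fin q] cV q by simp
  have s1: "(\<Sum>xs\<in>Om V. card (squash H (prt q n xs) k)) = (\<Sum>e\<in>H. cnt e)"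
  proof -
    have "(\<Sum>xs\<in>Om V. card (squash H (prt q n xs) k)) = (\<Sum>xs\<in>Om V. card {e\<in>H. e \<in> U k (prt q n xs)})"
      using squash_card_U[OF PE q] by (intro sum.cong) auto
    also have "\<dots> = (\<Sum>e\<in>H. cnt e)" unfolding cnt_def by (rule double_count[OF finOm finH])
    finally show ?thesis .
  qed
  have s2: "(\<Sum>xs\<in>Om V. card (U k (prt q n xs))) = (\<Sum>e\<in>E. cnt e)"
  proof -
    have "(\<Sum>xs\<in>Om V. card (U k (prt q n xs))) = (\<Sum>xs\<in>Om V. card {e\<in>E. e \<in> U k (prt q n xs)})"
    proof (intro sum.cong refl)
      fix xs assume "xs \<in> Om V"
      hence "U k (prt q n xs) \<subseteq> E" using U_sub[OF PE fin] by (simp add: E_def)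
      hence "{e\<in>E. e \<in> U k (prt q n xs)} = U k (prt q n xs)" by auto
      thus "card (U k (prt q n xs)) = card {e\<in>E. e \<in> U k (prt q n xs)}" by simp
    qed
    also have "\<dots> = (\<Sum>e\<in>E. cnt e)" unfolding cnt_def by (rule double_count[OF finOm finE])
    finally show ?thesis .
  qed
  have s3: "(\<Sum>xs\<in>Om V. card (U k (prt q n xs))) = card (Om V) * (n choose k)"
  proof -
    have "(\<Sum>xs\<in>Om V. card (U k (prt q n xs))) = (\<Sum>xs\<in>Om V. n choose k)"
      using card_U[OF PE q fin] cP by (intro sum.cong) auto
    thus ?thesis by simp
  qed
  have ceq: "cnt e = cnt e'" if "e \<in> E" "e' \<in> E" for e e'
    using cnt_le[OF fin cV q, of e e' k] cnt_le[OF fin cV q, of e' e k] that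
    by (auto simp: E_def cnt_def)
  have cE: "card E = (q*n) choose (q*k)" using n_subsets[OF fin, of "q*k"] cV by (simp add: E_def)
  show ?thesis
  proof (cases "H = {}")
    case True thus ?thesis using s1 by simp
  next
    case False
    then obtain e0 where e0: "e0 \<in> H" by blast
    hence e0E: "e0 \<in> E" using HE by blast
    have "(\<Sum>e\<in>H. cnt e) = (\<Sum>e\<in>H. cnt e0)"
    proof (rule sum.cong[OF refl])
      fix e assume "e \<in> H" hence "e \<in> E" using HE by blast
      thus "cnt e = cnt e0" by (rule ceq[OF _ e0E])
    qed
    hence h1: "(\<Sum>e\<in>H. cnt e) = card H * cnt e0" by simp
    have "(\<Sum>e\<in>E. cnt e) = (\<Sum>e\<in>E. cnt e0)"
    proof (rule sum.cong[OF refl])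
      fix e assume "e \<in> E"
      thus "cnt e = cnt e0" by (rule ceq[OF _ e0E])
    qed
    hence h2: "(\<Sum>e\<in>E. cnt e) = card E * cnt e0" by simp
    note h1 h2
    have "(\<Sum>xs\<in>Om V. card (squash H (prt q n xs) k)) * ((q*n) choose (q*k)) = card H * (cnt e0 * card E)"
      using s1 h1 cE by simp
    also have "cnt e0 * card E = card (Om V) * (n choose k)" using h2 s2 s3 by (simp add: mult.commute)
    finally show ?thesis by (simp add: mult_ac)
  qed
qed

lemma fiber_le:
  assumes xs: "xs \<in> Om V" and ys: "ys \<in> Om V" and cV: "card V = q*n" and fin: "finite V"
  shows "card {zs \<in> Om V. prt q n zs = prt q n xs} \<le> card {zs \<in> Om V. prt q n zs = prt q n ys}"
proof -
  define \<sigma> where "\<sigma> v = ys ! (THE i. i < length xs \<and> xs ! i = v)" for v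
  have lx: "length xs = card V" "length ys = card V" using Om_len xs ys by auto
  have dx: "distinct xs" "set xs = V" using xs by (auto simp: Om_def)
  have dy: "set ys = V" using ys by (auto simp: Om_def)
  have th: "(THE i'. i' < length xs \<and> xs ! i' = xs ! i) = i" if "i < length xs" for i
  proof (rule the_equality)
    show "i < length xs \<and> xs ! i = xs ! i" using that by simp
    fix i' assume "i' < length xs \<and> xs ! i' = xs ! i"
    thus "i' = i" using that dx(1) nth_eq_iff_index_eq[of xs i' i] by blast
  qed
  have mx: "map \<sigma> xs = ys"
  proof (rule nth_equalityI)
    show "length (map \<sigma> xs) = length ys" using lx by simp
    fix i assume "i < length (map \<sigma> xs)"
    thus "map \<sigma> xs ! i = ys ! i" using th by (simp add: \<sigma>_def)
  qed
  have imV: "\<sigma> ` V = V"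
  proof -
    have "\<sigma> ` V = set (map \<sigma> xs)" using dx(2) by simp
    thus ?thesis using mx dy by simp
  qed
  have injV: "inj_on \<sigma> V" using fin imV by (intro eq_card_imp_inj_on) simp_all
  have \<sigma>: "bij_betw \<sigma> V V" using injV imV by (simp add: bij_betw_def)
  show ?thesis
  proof (rule card_inj_on_le[where f = "map \<sigma>"])
    show "inj_on (map \<sigma>) {zs \<in> Om V. prt q n zs = prt q n xs}"
      using inj_map_Om[OF \<sigma>] by (rule inj_on_subset) auto
    show "finite {zs \<in> Om V. prt q n zs = prt q n ys}" using finite_Om[OF fin] by simp
    show "map \<sigma> ` {zs \<in> Om V. prt q n zs = prt q n xs} \<subseteq> {zs \<in> Om V. prt q n zs = prt q n ys}"
    proof
      fix ws assume "ws \<in> map \<sigma> ` {zs \<in> Om V. prt q n zs = prt q n xs}"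
      then obtain zs where zs: "zs \<in> Om V" "prt q n zs = prt q n xs" "ws = map \<sigma> zs" by blast
      have lz: "length zs = q*n" using Om_len[OF zs(1)] cV by simp
      have lx': "length xs = q*n" using lx cV by simp
      have "prt q n ws = (\<lambda>B. \<sigma> ` B) ` prt q n zs" using prt_map[OF lz] zs(3) by simp
      also have "\<dots> = (\<lambda>B. \<sigma> ` B) ` prt q n xs" using zs(2) by simp
      also have "\<dots> = prt q n (map \<sigma> xs)" using prt_map[OF lx', of \<sigma>] by simp
      also have "\<dots> = prt q n ys" using mx by simp
      finally show "ws \<in> {zs \<in> Om V. prt q n zs = prt q n ys}" using Om_map[OF \<sigma> zs(1)] zs(3) by simp
    qed
  qed
qed

theorem lemma6p1:
  fixes V :: "'a set" and H :: "'a set set" and k n q :: nat and eps :: real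
  assumes "k \<ge> 1" and "n \<ge> 1" and "q \<ge> 2" and "eps > 0"
    and "finite V" and "card V = q * n"
    and "\<forall>e\<in>H. e \<subseteq> V \<and> card e = q * k"
  shows "real (card {P \<in> eq_partitions V q.
             real (card (squash H P k)) \<ge>
               real (n choose k) / real ((q * n) choose (q * k)) * real (card H) - eps * real n ^ k})
           / real (card (eq_partitions V q))
         \<ge> 1 - 2 * exp (- (eps\<^sup>2 * real n / (16 * real q)))"
proof -
  have q: "q > 0" using assms(3) by simp
  have k: "k \<ge> 1" using assms(1) .
  note fin = assms(5) and cV = assms(6) and Hs = assms(7)
  define S where "S = Om V"
  define g where "g = (\<lambda>xs. real (card (squash H (prt q n xs) k)))"
  define m where "m = real n ^ (k - 1)"
  define c where "c = 2 * m"
  define N where "N = q*n"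
  define t where "t = eps * real n ^ k"
  define thr where "thr = real (n choose k) / real ((q * n) choose (q * k)) * real (card H) - eps * real n ^ k"
  define \<mu> where "\<mu> = avg S g"
  define x where "x = eps\<^sup>2 * real n / (16 * real q)"
  have finS: "finite S" using finite_Om[OF fin] by (simp add: S_def)
  have neS: "S \<noteq> {}" using Om_ne[OF fin] by (simp add: S_def)
  have cSpos: "real (card S) > 0" using finS neS by (simp add: card_gt_0_iff)
  have lenS: "length xs = N" if "xs \<in> S" for xs using Om_len[of xs V] that cV by (simp add: S_def N_def)
  have npos: "real n > 0" using assms(2) by simp
  have mpos: "m > 0" using npos by (simp add: m_def)
  have cpos: "c > 0" using mpos by (simp add: c_def)
  have nk: "real n ^ k = m * real n"
  proof -
    have "k = Suc (k - 1)" using k by simp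
    hence "real n ^ k = real n ^ Suc (k - 1)" by (rule arg_cong)
    thus ?thesis by (simp add: m_def mult.commute)
  qed
  have bd: "\<bar>avg (cls S (p @ [a])) g - avg (cls S (p @ [b])) g\<bar> \<le> c"
    if "cls S (p @ [a]) \<noteq> {}" "cls S (p @ [b]) \<noteq> {}" for p a b
    using bd_Om[OF fin cV q k, of p a b H] that by (simp add: S_def g_def c_def m_def)
  have mart: "(\<Sum>xs\<in>S. exp (l * (\<mu> - g xs))) \<le> real (card S) * exp (l\<^sup>2 * c\<^sup>2 * real N / 8)"
    if l: "l \<ge> 0" for l
  proof -
    have cl: "cls S [] = S" by (simp add: cls_def)
    show ?thesis using martingale_bound[OF finS lenS _ bd l, of "[]" N] cpos neS
      by (simp add: cl \<mu>_def)
  qed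
  have sumg: "(\<Sum>xs\<in>S. g xs) = real (\<Sum>xs\<in>S. card (squash H (prt q n xs) k))" by (simp add: g_def)
  have ex: "real (\<Sum>xs\<in>S. card (squash H (prt q n xs) k)) * real ((q*n) choose (q*k))
            = real (card H) * real (card S) * real (n choose k)"
  proof -
    have "(\<Sum>xs\<in>S. card (squash H (prt q n xs) k)) * ((q*n) choose (q*k)) = card H * card S * (n choose k)"
      using expect[OF fin cV q Hs] by (simp add: S_def)
    hence "real ((\<Sum>xs\<in>S. card (squash H (prt q n xs) k)) * ((q*n) choose (q*k))) = real (card H * card S * (n choose k))"
      by (rule arg_cong)
    thus ?thesis by simp
  qed
  have g0: "g xs \<ge> 0" for xs by (simp add: g_def)
  have mu_ge: "thr + t \<le> \<mu>"
  proof (cases "(q*n) choose (q*k) = 0")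
    case True
    have "thr + t = real (n choose k) / real ((q*n) choose (q*k)) * real (card H)" by (simp add: thr_def t_def)
    also have "\<dots> = 0" by (simp only: True of_nat_0 div_by_0 mult_zero_left)
    finally have "thr + t = 0" .
    moreover have "\<mu> \<ge> 0" using g0 by (simp add: \<mu>_def avg_def sum_nonneg)
    ultimately show ?thesis by simp
  next
    case False
    hence Bp: "real ((q*n) choose (q*k)) > 0" by (simp del: binomial_eq_0_iff)
    have "\<mu> = real (\<Sum>xs\<in>S. card (squash H (prt q n xs) k)) / real (card S)"
      by (simp add: \<mu>_def avg_def sumg)
    also have "\<dots> = real (card H) * real (n choose k) / real ((q*n) choose (q*k))"
      using ex Bp cSpos by (simp add: field_simps del: binomial_eq_0_iff)
    also have "\<dots> = thr + t" by (simp add: thr_def t_def)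
    finally show ?thesis by simp
  qed
  define Bad where "Bad = {xs\<in>S. g xs < thr}"
  have BadS: "Bad \<subseteq> S" by (auto simp: Bad_def)
  have finBad: "finite Bad" using finS BadS by (rule finite_subset[rotated])
  define l where "l = eps / (m * real q)"
  have lpos: "l \<ge> 0" using assms(4) mpos q by (simp add: l_def)
  have t_eq: "t = eps * m * real n" by (simp add: t_def nk)
  have key: "l\<^sup>2 * c\<^sup>2 * real N / 8 - l * t = - (eps\<^sup>2 * real n / (2 * real q))"
    using mpos q by (simp add: l_def c_def N_def t_eq field_simps power2_eq_square)
  have bad: "real (card Bad) \<le> real (card S) * exp (- x)"
  proof -
    have "real (card Bad) * exp (l * t) = (\<Sum>xs\<in>Bad. exp (l * t))" by simp
    also have "\<dots> \<le> (\<Sum>xs\<in>Bad. exp (l * (\<mu> - g xs)))"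
    proof (rule sum_mono)
      fix xs assume "xs \<in> Bad"
      hence "t \<le> \<mu> - g xs" using mu_ge by (simp add: Bad_def)
      thus "exp (l * t) \<le> exp (l * (\<mu> - g xs))" using lpos by (simp add: mult_left_mono)
    qed
    also have "\<dots> \<le> (\<Sum>xs\<in>S. exp (l * (\<mu> - g xs)))"
      using finS BadS by (intro sum_mono2) auto
    also have "\<dots> \<le> real (card S) * exp (l\<^sup>2 * c\<^sup>2 * real N / 8)" by (rule mart[OF lpos])
    finally have "real (card Bad) * exp (l * t) \<le> real (card S) * exp (l\<^sup>2 * c\<^sup>2 * real N / 8)" .
    hence "real (card Bad) \<le> real (card S) * exp (l\<^sup>2 * c\<^sup>2 * real N / 8) / exp (l * t)"
      by (simp add: field_simps)
    also have "\<dots> = real (card S) * exp (l\<^sup>2 * c\<^sup>2 * real N / 8 - l * t)"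
      by (simp add: exp_diff)
    also have "\<dots> = real (card S) * exp (- (eps\<^sup>2 * real n / (2 * real q)))" by (simp add: key)
    also have "\<dots> \<le> real (card S) * exp (- x)"
    proof -
      have "eps\<^sup>2 * real n / (16 * real q) \<le> eps\<^sup>2 * real n / (2 * real q)"
        using q npos by (intro divide_left_mono) (auto intro: mult_nonneg_nonneg)
      thus ?thesis by (intro mult_left_mono) (auto simp: x_def)
    qed
    finally show ?thesis .
  qed
  define EP where "EP = eq_partitions V q"
  have inEP: "prt q n xs \<in> EP" if "xs \<in> S" for xs
    using prt_EP'[OF _ cV q] that by (simp add: S_def EP_def)
  have surj: "\<exists>xs\<in>S. prt q n xs = P" if "P \<in> EP" for P
    using prt_surj[OF _ fin q cV] that by (simp add: S_def EP_def)
  have finEP: "finite EP"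
  proof (rule finite_subset)
    show "EP \<subseteq> Pow (Pow V)" by (auto simp: EP_def eq_partitions_def)
    show "finite (Pow (Pow V))" using fin by simp
  qed
  obtain x0 where x0: "x0 \<in> S" using neS by blast
  define K where "K = card {zs\<in>S. prt q n zs = prt q n x0}"
  have fib: "card {zs\<in>S. prt q n zs = P} = K" if P: "P \<in> EP" for P
  proof -
    obtain xs where xs: "xs \<in> S" "prt q n xs = P" using surj[OF P] by blast
    have "card {zs\<in>S. prt q n zs = prt q n xs} \<le> K"
      using fiber_le[of xs V x0 q n] xs x0 cV fin by (simp add: S_def K_def)
    moreover have "K \<le> card {zs\<in>S. prt q n zs = prt q n xs}"
      using fiber_le[of x0 V xs q n] xs x0 cV fin by (simp add: S_def K_def)
    ultimately show ?thesis using xs by simp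
  qed
  have cS: "card S = K * card EP"
  proof -
    have "(\<Sum>P\<in>EP. \<Sum>xs\<in>{xs \<in> S. prt q n xs = P}. (1::nat)) = (\<Sum>xs\<in>S. 1)"
      using inEP by (intro sum.group[OF finS finEP]) auto
    hence "(\<Sum>P\<in>EP. card {xs \<in> S. prt q n xs = P}) = card S" by simp
    moreover have "(\<Sum>P\<in>EP. card {xs \<in> S. prt q n xs = P}) = (\<Sum>P\<in>EP. K)"
      using fib by (intro sum.cong) auto
    ultimately show ?thesis by (simp add: mult.commute)
  qed
  define G where "G = {P \<in> EP. real (card (squash H P k)) \<ge> thr}"
  define SG where "SG = {xs\<in>S. g xs \<ge> thr}"
  have finSG: "finite SG" using finS by (simp add: SG_def)
  have finG: "finite G" using finEP by (simp add: G_def)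
  have cSG: "card SG = K * card G"
  proof -
    have "(\<Sum>P\<in>G. \<Sum>xs\<in>{xs \<in> SG. prt q n xs = P}. (1::nat)) = (\<Sum>xs\<in>SG. 1)"
      using inEP by (intro sum.group[OF finSG finG]) (auto simp: SG_def G_def g_def)
    hence "(\<Sum>P\<in>G. card {xs \<in> SG. prt q n xs = P}) = card SG" by simp
    moreover have "(\<Sum>P\<in>G. card {xs \<in> SG. prt q n xs = P}) = (\<Sum>P\<in>G. K)"
    proof (rule sum.cong[OF refl])
      fix P assume P: "P \<in> G"
      hence "{xs \<in> SG. prt q n xs = P} = {xs \<in> S. prt q n xs = P}"
        by (auto simp: SG_def G_def g_def)
      thus "card {xs \<in> SG. prt q n xs = P} = K" using fib P by (simp add: G_def)
    qed
    ultimately show ?thesis by (simp add: mult.commute)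
  qed
  have SGeq: "SG = S - Bad" by (auto simp: SG_def Bad_def)
  have rSG: "real (card SG) = real (card S) - real (card Bad)"
    using SGeq BadS finBad by (simp add: card_Diff_subset of_nat_diff card_mono finS)
  have Kpos: "K > 0"
  proof -
    have "x0 \<in> {zs\<in>S. prt q n zs = prt q n x0}" using x0 by simp
    moreover have "finite {zs\<in>S. prt q n zs = prt q n x0}" using finS by simp
    ultimately show ?thesis unfolding K_def by (auto simp: card_gt_0_iff)
  qed
  have ratio: "real (card G) / real (card EP) = real (card SG) / real (card S)"
    using Kpos by (simp add: cSG cS)
  also have "\<dots> = 1 - real (card Bad) / real (card S)" using cSpos by (simp add: rSG field_simps)
  also have "\<dots> \<ge> 1 - exp (- x)"
  proof -
    have "real (card Bad) / real (card S) \<le> exp (- x)" using bad cSpos by (simp add: field_simps)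
    thus ?thesis by simp
  qed
  finally have "real (card G) / real (card EP) \<ge> 1 - exp (- x)" .
  hence "1 - 2 * exp (- x) \<le> real (card G) / real (card EP)" using exp_gt_zero[of "- x"] by linarith
  thus ?thesis unfolding G_def EP_def thr_def x_def .
qed

end
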